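(* Let $\mathcal A\in\mathbb C^{n_1\times n_1\times n_3}$ with $\mathrm{ind}(\mathcal A)=k$ and let $\mathcal A^-$ be a fixed element of $\mathcal A\{1\}$. Then: (a) $\mathcal A^{-,D}\mathcal A=\mathcal A^-\mathcal A$ if and only if $\mathcal A\mathcal A^D\mathcal A=\mathcal A$; (b) $\mathcal A^{-,D}\mathcal A=\mathcal A^D\mathcal A$ if and only if $\mathcal A^{-,D}=\mathcal A^D$; (c) $\mathcal A^k\mathcal A^-\mathcal A^k=\mathcal A^k$ if and only if $\mathcal A^k\mathcal A^{-,D}\mathcal A^k=\mathcal A^k$; (d) $\mathcal A^{-,D}=\mathcal A^D$ if and only if $\mathcal A^{-,D}\mathcal A=\mathcal A\mathcal A^{-,D}$.
   Context: Fix a nonsingular matrix $M\in\mathbb C^{n_3\times n_3}$. For $\mathcal C\in\mathbb C^{n_1\times n_2\times n_3}$ let $\widehat{\mathcal C}=\mathcal C\times_3M$, i.e. $\widehat{\mathcal C}_{ijk}=\sum_{l=1}^{n_3}M_{kl}\mathcal C_{ijl}$, and let $\widehat{\mathcal C}^{(i)}$ denote its $i$-th frontal slice. The M-product $\mathcal C\star_M\mathcal D$ of $\mathcal C\in\mathbb C^{n_1\times n_2\times n_3}$ and $\mathcal D\in\mathbb C^{n_2\times l\times n_3}$ is the unique tensor with $\widehat{\mathcal C\star_M\mathcal D}^{(i)}=\widehat{\mathcal C}^{(i)}\widehat{\mathcal D}^{(i)}$ for all $i\in[n_3]$. Juxtaposition of tensors denotes the M-product; powers are M-product powers with $\mathcal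 A^0=\mathcal I$ where $\widehat{\mathcal I}^{(i)}=I_{n_1}$. $\mathcal A\{1\}$ is the set of all $\mathcal W$ with $\mathcal A\mathcal W\mathcal A=\mathcal A$. The index $\mathrm{ind}(\mathcal A)$ is $\max_{i}\mathrm{ind}(\widehat{\mathcal A}^{(i)})$, where the index of a square matrix $B$ is the least $k\ge0$ with $\mathrm{rank}(B^{k+1})=\mathrm{rank}(B^k)$. For $\mathrm{ind}(\mathcal A)=k$, the Drazin inverse $\mathcal A^D$ is the unique $\mathcal W$ with $\mathcal W\mathcal A^{k+1}=\mathcal A^k$, $\mathcal W\mathcal A\mathcal W=\mathcal W$, $\mathcal A\mathcal W=\mathcal W\mathcal A$. The 1-D inverse is $\mathcal A^{-,D}=\mathcal A^-\mathcal A\mathcal A^D$. *)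

theory Defs
  imports "HOL-Analysis.Analysis"
begin

text \<open>Third-order tensors in C^(n x n x p): a tensor is the family of its frontal
  slices, C $ l $ i $ j = C_ijl. Only square frontal slices (n1 = n2 = n) are needed.\<close>

type_synonym ('n, 'p) tensor = "complex ^ 'n ^ 'n ^ 'p"

text \<open>Mode-3 product with M: hat C_ijk = sum_l M_kl C_ijl.\<close>
definition that :: "complex ^ 'p ^ 'p \<Rightarrow> ('n::finite, 'p::finite) tensor \<Rightarrow> ('n, 'p) tensor" where
  "that M C = (\<chi> k i j. \<Sum>l\<in>UNIV. M $ k $ l * C $ l $ i $ j)"

definition mprod :: "complex ^ 'p ^ 'p \<Rightarrow> ('n::finite, 'p::finite) tensor \<Rightarrow> ('n, 'p) tensor \<Rightarrow> ('n, 'p) tensor" where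
  "mprod M C D = (THE E. \<forall>k. that M E $ k = that M C $ k ** that M D $ k)"

definition tid :: "complex ^ 'p ^ 'p \<Rightarrow> ('n::finite, 'p::finite) tensor" where
  "tid M = (THE E. \<forall>k. that M E $ k = mat 1)"

primrec tpow :: "complex ^ 'p ^ 'p \<Rightarrow> ('n::finite, 'p::finite) tensor \<Rightarrow> nat \<Rightarrow> ('n, 'p) tensor" where
  "tpow M A 0 = tid M"
| "tpow M A (Suc m) = mprod M (tpow M A m) A"

primrec mpow :: "complex ^ 'n ^ 'n \<Rightarrow> nat \<Rightarrow> complex ^ 'n ^ 'n" where
  "mpow B 0 = mat 1"
| "mpow B (Suc m) = mpow B m ** B"

definition mind :: "complex ^ 'n ^ 'n \<Rightarrow> nat" where
  "mind B = (LEAST k. rank (mpow B (Suc k)) = rank (mpow B k))"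

definition tind :: "complex ^ 'p ^ 'p \<Rightarrow> ('n::finite, 'p::finite) tensor \<Rightarrow> nat" where
  "tind M A = Max (range (\<lambda>i. mind (that M A $ i)))"

definition tdrazin :: "complex ^ 'p ^ 'p \<Rightarrow> ('n::finite, 'p::finite) tensor \<Rightarrow> ('n, 'p) tensor" where
  "tdrazin M A = (THE W. mprod M W (tpow M A (Suc (tind M A))) = tpow M A (tind M A)
                    \<and> mprod M (mprod M W A) W = W \<and> mprod M A W = mprod M W A)"

definition tinner :: "complex ^ 'p ^ 'p \<Rightarrow> ('n::finite, 'p::finite) tensor \<Rightarrow> ('n, 'p) tensor set" where
  "tinner M A = {W. mprod M (mprod M A W) A = A}"

definition t1D :: "complex ^ 'p ^ 'p \<Rightarrow> ('n::finite, 'p::finite) tensor \<Rightarrow> ('n, 'p) tensor \<Rightarrow> ('n, 'p) tensor" where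
  "t1D M A Am = mprod M (mprod M Am A) (tdrazin M A)"

end

theory Submission
  imports Defs
begin


locale mon =
  fixes f :: "'a \<Rightarrow> 'a \<Rightarrow> 'a" (infixl "\<odot>" 70) and e :: 'a and pw :: "'a \<Rightarrow> nat \<Rightarrow> 'a"
  assumes assoc: "(a \<odot> b) \<odot> c = a \<odot> (b \<odot> c)"
    and lid[simp]: "e \<odot> a = a" and rid[simp]: "a \<odot> e = a"
    and pw0[simp]: "pw a 0 = e" and pwS: "pw a (Suc n) = pw a n \<odot> a"
begin

lemma pw_add: "pw a (m + n) = pw a m \<odot> pw a n"
  by (induction n) (simp_all add: pwS assoc)

lemma pw_Suc': "pw a (Suc n) = a \<odot> pw a n"
  using pw_add[of a 1 n] by (simp add: pwS)

lemma pw1[simp]: "pw a (Suc 0) = a" by (simp add: pwS)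

lemma comm_pw: "x \<odot> y = y \<odot> x \<Longrightarrow> x \<odot> pw y n = pw y n \<odot> x"
proof (induction n)
  case (Suc n)
  have "x \<odot> pw y (Suc n) = (x \<odot> pw y n) \<odot> y" by (simp add: pwS assoc)
  also have "\<dots> = pw y n \<odot> (x \<odot> y)" using Suc by (simp add: assoc)
  also have "\<dots> = pw y (Suc n) \<odot> x" using Suc.prems by (simp add: pwS assoc)
  finally show ?case .
qed simp

definition dr :: "'a \<Rightarrow> nat \<Rightarrow> 'a \<Rightarrow> bool" where
  "dr a k d \<longleftrightarrow> d \<odot> pw a (Suc k) = pw a k \<and> (d \<odot> a) \<odot> d = d \<and> a \<odot> d = d \<odot> a"

lemma dr_exists:
  assumes z: "pw a k = z \<odot> pw a (Suc k)" and y: "pw a k = pw a (Suc k) \<odot> y"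
  shows "dr a k (pw z (Suc k) \<odot> pw a k)"
proof -
  have Z: "pw a k = pw z j \<odot> pw a (k + j)" for j
  proof (induction j)
    case (Suc j)
    have "pw z (Suc j) \<odot> pw a (k + Suc j) = pw z j \<odot> (z \<odot> pw a (Suc k)) \<odot> pw a j"
    proof -
      have "pw a (k + Suc j) = pw a (Suc k) \<odot> pw a j" using pw_add[of a "Suc k" j] by simp
      then show ?thesis by (simp add: pwS assoc)
    qed
    also have "\<dots> = pw z j \<odot> (pw a k \<odot> pw a j)" using z by (simp add: assoc)
    also have "\<dots> = pw a k" using Suc.IH by (simp add: pw_add)
    finally show ?case ..
  qed simp
  have Y: "pw a k = pw a (k + j) \<odot> pw y j" for j
  proof (induction j)
    case (Suc j)
    have e1: "pw a (k + Suc j) = pw a j \<odot> pw a (Suc k)" using pw_add[of a j "Suc k"] by (simp add: add.commute)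
    have "pw a (k + Suc j) \<odot> pw y (Suc j) = pw a j \<odot> (pw a (Suc k) \<odot> y) \<odot> pw y j"
      unfolding e1 pw_Suc'[of y j] by (simp add: assoc)
    also have "\<dots> = pw a (k + j) \<odot> pw y j" using y[symmetric] pw_add[of a j k] by (simp add: add.commute)
    finally show ?case using Suc.IH by simp
  qed simp
  define d where "d = pw z (Suc k) \<odot> pw a k"
  have A2: "pw a k \<odot> pw a k = pw a (k + k)" by (simp add: pw_add)
  have d2: "d = pw a k \<odot> pw y (Suc k)"
  proof -
    have "d = pw z (Suc k) \<odot> (pw a (k + Suc k) \<odot> pw y (Suc k))" unfolding d_def using Y[of "Suc k"] by simp
    also have "\<dots> = (pw z (Suc k) \<odot> pw a (k + Suc k)) \<odot> pw y (Suc k)" by (simp add: assoc)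
    finally show ?thesis using Z[of "Suc k"] by simp
  qed
  have c1: "d \<odot> pw a (Suc k) = pw a k"
    unfolding d_def using Z[of "Suc k"] pw_add[of a k "Suc k"] by (simp add: assoc)
  have da: "d \<odot> a = pw z k \<odot> pw a k"
  proof -
    have "d \<odot> a = pw z k \<odot> (z \<odot> pw a (Suc k))" unfolding d_def pwS[of z k] pwS[of a k] by (simp add: assoc)
    then show ?thesis using z by simp
  qed
  have ad: "a \<odot> d = pw a k \<odot> pw y k"
  proof -
    have "a \<odot> d = (pw a (Suc k) \<odot> y) \<odot> pw y k" unfolding d2 pw_Suc'[of a k] pw_Suc'[of y k] by (simp add: assoc)
    then show ?thesis using y by simp
  qed
  have eq: "pw z k \<odot> pw a k = pw a k \<odot> pw y k"
  proof -
    have "pw z k \<odot> pw a k = pw z k \<odot> (pw a (k + k) \<odot> pw y k)" using Y[of k] by simp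
    also have "\<dots> = (pw z k \<odot> pw a (k + k)) \<odot> pw y k" by (simp add: assoc)
    finally show ?thesis using Z[of k] by simp
  qed
  have c2: "(d \<odot> a) \<odot> d = d"
  proof -
    have "(d \<odot> a) \<odot> d = (pw z k \<odot> pw a k) \<odot> d" using da by simp
    also have "\<dots> = (pw z k \<odot> pw a k) \<odot> (pw a k \<odot> pw y (Suc k))" by (subst d2) (rule refl)
    also have "\<dots> = (pw z k \<odot> (pw a k \<odot> pw a k)) \<odot> pw y (Suc k)" by (simp add: assoc)
    also have "\<dots> = (pw z k \<odot> pw a (k + k)) \<odot> pw y (Suc k)" by (simp add: A2 assoc)
    also have "\<dots> = pw a k \<odot> pw y (Suc k)" using Z[of k] by simp
    finally show ?thesis using d2 by simp
  qed
  show ?thesis unfolding dr_def d_def[symmetric] using c1 c2 da ad eq by simp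
qed

lemma dr_facts:
  assumes "dr a k d"
  shows "pw d (Suc j) \<odot> pw a (Suc j) = d \<odot> a" "pw a (Suc j) \<odot> pw d (Suc j) = d \<odot> a"
proof -
  have c: "a \<odot> d = d \<odot> a" and dad: "d \<odot> a \<odot> d = d" using assms by (auto simp: dr_def)
  have ca: "(d \<odot> a) \<odot> a = a \<odot> (d \<odot> a)" using c by (metis assoc)
  have ee: "(d \<odot> a) \<odot> (d \<odot> a) = d \<odot> a" using dad by (metis assoc)
  show 1: "pw d (Suc j) \<odot> pw a (Suc j) = d \<odot> a" for j
  proof (induction j)
    case (Suc j)
    have "pw d (Suc (Suc j)) \<odot> pw a (Suc (Suc j)) = pw d (Suc j) \<odot> (d \<odot> a) \<odot> pw a (Suc j)"
      by (simp add: pwS[of d "Suc j"] pw_Suc'[of a "Suc j"] assoc)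
    also have "\<dots> = pw d (Suc j) \<odot> pw a (Suc j) \<odot> (d \<odot> a)"
      using comm_pw[OF ca, of "Suc j"] by (simp add: assoc)
    finally show ?case using Suc ee by simp
  qed simp
  have "pw a (Suc j) \<odot> pw d (Suc j) = pw d (Suc j) \<odot> pw a (Suc j)" for j
    using comm_pw[OF comm_pw[OF c, symmetric], of "Suc j" "Suc j"] by simp
  then show "pw a (Suc j) \<odot> pw d (Suc j) = d \<odot> a" using 1 by simp
qed

lemma dr_unique:
  assumes d1: "dr a k d1" and d2: "dr a k d2"
  shows "d1 = d2"
proof -
  have c1: "a \<odot> d1 = d1 \<odot> a" and dad1: "d1 \<odot> a \<odot> d1 = d1" and p1: "d1 \<odot> pw a (Suc k) = pw a k"
    using d1 by (auto simp: dr_def)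
  have c2: "a \<odot> d2 = d2 \<odot> a" and dad2: "d2 \<odot> a \<odot> d2 = d2" and p2: "d2 \<odot> pw a (Suc k) = pw a k"
    using d2 by (auto simp: dr_def)
  have q2: "pw a k = pw a (Suc k) \<odot> d2" using p2 comm_pw[OF c2[symmetric]] by metis
  have A1: "pw a (Suc k) = (d1 \<odot> a) \<odot> pw a (Suc k)"
    by (metis assoc c1 p1 pw_Suc')
  have A2: "pw a (Suc k) = pw a (Suc k) \<odot> (a \<odot> d2)"
    by (metis assoc comm_pw[OF c2[symmetric]] q2 pwS)
  have e1: "d1 \<odot> a = (d1 \<odot> a) \<odot> (d2 \<odot> a)"
    using dr_facts(1)[OF d1, of k] A2 c2 by (metis assoc)
  have e2: "d2 \<odot> a = (d1 \<odot> a) \<odot> (d2 \<odot> a)"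
    using dr_facts(2)[OF d2, of k] A1 by (metis assoc)
  have "d1 = d1 \<odot> (d1 \<odot> a)" using dad1 c1 by (metis assoc)
  also have "\<dots> = d1 \<odot> (d2 \<odot> a)" using e1 e2 by simp
  also have "\<dots> = (d1 \<odot> a) \<odot> d2" using c2 by (metis assoc)
  also have "\<dots> = (d2 \<odot> a) \<odot> d2" using e1 e2 by simp
  finally show ?thesis using dad2 by simp
qed

lemma main:
  assumes D: "dr a k D" and X: "(a \<odot> X) \<odot> a = a"
  defines "G \<equiv> (X \<odot> a) \<odot> D"
  shows "(G \<odot> a = X \<odot> a \<longleftrightarrow> (a \<odot> D) \<odot> a = a)
       \<and> (G \<odot> a = D \<odot> a \<longleftrightarrow> G = D)
       \<and> ((pw a k \<odot> X) \<odot> pw a k = pw a k \<longleftrightarrow> (pw a k \<odot> G) \<odot> pw a k = pw a k)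
       \<and> (G = D \<longleftrightarrow> G \<odot> a = a \<odot> G)"
proof -
  have c: "a \<odot> D = D \<odot> a" and dad: "D \<odot> a \<odot> D = D" and p: "D \<odot> pw a (Suc k) = pw a k"
    using D by (auto simp: dr_def)
  have pa: "(a \<odot> D) \<odot> pw a k = pw a k" using p c by (metis assoc pw_Suc')
  have b: "G \<odot> a = D \<odot> a \<longleftrightarrow> G = D"
  proof
    assume h: "G \<odot> a = D \<odot> a"
    have "G = X \<odot> a \<odot> (D \<odot> a \<odot> D)" unfolding G_def using dad by simp
    also have "\<dots> = (G \<odot> a) \<odot> D" unfolding G_def by (simp add: assoc)
    finally show "G = D" using h dad by simp
  qed simp
  have a: "G \<odot> a = X \<odot> a \<longleftrightarrow> (a \<odot> D) \<odot> a = a"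
  proof
    assume h: "G \<odot> a = X \<odot> a"
    have "(a \<odot> D) \<odot> a = a \<odot> G \<odot> a" using X unfolding G_def by (metis assoc)
    also have "\<dots> = a" using h X by (simp add: assoc)
    finally show "(a \<odot> D) \<odot> a = a" .
  next
    assume h: "(a \<odot> D) \<odot> a = a"
    show "G \<odot> a = X \<odot> a" unfolding G_def using h by (metis assoc)
  qed
  have cc: "(pw a k \<odot> G) \<odot> pw a k = (pw a k \<odot> X) \<odot> pw a k"
    unfolding G_def using pa by (metis assoc)
  have d: "G = D \<longleftrightarrow> G \<odot> a = a \<odot> G"
  proof
    assume "G = D" then show "G \<odot> a = a \<odot> G" using c by simp
  next
    assume h: "G \<odot> a = a \<odot> G"
    have "a \<odot> G = a \<odot> D" unfolding G_def using X by (metis assoc)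
    then show "G = D" using b h c by simp
  qed
  show ?thesis using a b cc d by simp
qed
end


lemma row_mult: "row i (X ** Y) = (\<Sum>l\<in>UNIV. X $ i $ l *s row l Y)"
  by (simp add: vec_eq_iff row_def matrix_matrix_mult_def)

lemma rows_mult_span: "rows (X ** (Y::'a::field^'n^'m)) \<subseteq> vec.span (rows Y)"
proof
  fix v assume "v \<in> rows (X ** Y)"
  then obtain i where v: "v = row i (X ** Y)" by (auto simp: rows_def)
  show "v \<in> vec.span (rows Y)" unfolding v row_mult
    by (intro vec.span_sum vec.span_scale vec.span_base) (auto simp: rows_def)
qed

lemma span_rows_repr:
  fixes Y :: "'a::field^'n^'m"
  assumes "v \<in> vec.span (rows Y)"
  shows "\<exists>c. v = (\<Sum>l\<in>UNIV. c l *s row l Y)"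
proof -
  let ?S = "{v. \<exists>c. v = (\<Sum>l\<in>UNIV. c l *s row l Y)}"
  have sub: "vec.subspace ?S"
    unfolding vec.subspace_def
  proof (intro conjI allI impI ballI)
    show "0 \<in> ?S" by (rule CollectI, rule exI[of _ "\<lambda>_. 0"]) simp
  next
    fix x y assume "x \<in> ?S" "y \<in> ?S"
    then obtain c d where "x = (\<Sum>l\<in>UNIV. c l *s row l Y)" "y = (\<Sum>l\<in>UNIV. d l *s row l Y)" by auto
    then show "x + y \<in> ?S"
      by (intro CollectI exI[of _ "\<lambda>l. c l + d l"]) (simp add: sum.distrib vector_sadd_rdistrib)
  next
    fix a x assume "x \<in> ?S"
    then obtain c where "x = (\<Sum>l\<in>UNIV. c l *s row l Y)" by auto
    then show "a *s x \<in> ?S"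
      by (intro CollectI exI[of _ "\<lambda>l. a * c l"]) (simp add: vec.scale_sum_right)
  qed
  have "rows Y \<subseteq> ?S"
  proof
    fix v assume "v \<in> rows Y"
    then obtain i where v: "v = row i Y" by (auto simp: rows_def)
    show "v \<in> ?S"
      by (intro CollectI exI[of _ "\<lambda>l. if l = i then 1 else 0"]) (simp add: v vec_eq_iff if_distrib[of "\<lambda>x. x * _"] cong: if_cong)
  qed
  then have "vec.span (rows Y) \<subseteq> ?S" using sub by (rule vec.span_minimal)
  then show ?thesis using assms by auto
qed

lemma rows_span_factor:
  fixes X :: "'a::field^'n^'m" and Y :: "'a^'n^'k"
  assumes "rows X \<subseteq> vec.span (rows Y)"
  shows "\<exists>Z. X = Z ** Y"
proof -
  have "\<forall>i. \<exists>c. row i X = (\<Sum>l\<in>UNIV. c l *s row l Y)"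
    using assms span_rows_repr by (auto simp: rows_def)
  then obtain c where c: "\<And>i. row i X = (\<Sum>l\<in>UNIV. c i l *s row l Y)" by metis
  show ?thesis
  proof (intro exI[of _ "\<chi> i l. c i l"])
    have "X $ i $ j = ((\<chi> i l. c i l) ** Y) $ i $ j" for i j
    proof -
      have "X $ i $ j = row i X $ j" by (simp add: row_def)
      also have "\<dots> = ((\<chi> i l. c i l) ** Y) $ i $ j" unfolding c
        by (simp add: matrix_matrix_mult_def row_def)
      finally show "X $ i $ j = ((\<chi> i l. c i l) ** Y) $ i $ j" .
    qed
    then show "X = (\<chi> i l. c i l) ** Y" by (simp add: vec_eq_iff)
  qed
qed

lemma dim_rows_le_columns:
  fixes A :: "'a::field^'n^'m"
  shows "vec.dim (rows A) \<le> vec.dim (columns A)"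
proof -
  obtain Bs where Bs: "Bs \<subseteq> vec.span (columns A)" "vec.independent Bs"
    "vec.span (columns A) \<subseteq> vec.span Bs" "card Bs = vec.dim (vec.span (columns A))"
    using vec.basis_exists by blast
  have fin: "finite Bs" using Bs(2) vec.finiteI_independent by blast
  have "\<forall>j. \<exists>u. column j A = (\<Sum>b\<in>Bs. u b *s b)"
  proof
    fix j
    have "column j A \<in> vec.span Bs" using Bs(3) vec.span_base[of "column j A" "columns A"]
      by (auto simp: columns_def)
    then show "\<exists>u. column j A = (\<Sum>b\<in>Bs. u b *s b)" using vec.span_finite[OF fin] by auto
  qed
  then obtain U where U: "\<And>j. column j A = (\<Sum>b\<in>Bs. U j b *s b)" by metis
  define w where "w b = (\<chi> j. U j b)" for b
  have "rows A \<subseteq> vec.span (w ` Bs)"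
  proof
    fix v assume "v \<in> rows A"
    then obtain i where v: "v = row i A" by (auto simp: rows_def)
    have "v $ j = (\<Sum>b\<in>Bs. (b $ i) *s w b) $ j" for j
    proof -
      have "A $ i $ j = column j A $ i" by (simp add: column_def)
      also have "\<dots> = (\<Sum>b\<in>Bs. U j b * b $ i)" by (subst U) simp
      finally show "v $ j = (\<Sum>b\<in>Bs. (b $ i) *s w b) $ j"
        by (simp add: v row_def w_def mult.commute)
    qed
    then have "v = (\<Sum>b\<in>Bs. (b $ i) *s w b)" by (simp add: vec_eq_iff)
    also have "\<dots> \<in> vec.span (w ` Bs)"
      by (intro vec.span_sum vec.span_scale vec.span_base) auto
    finally show "v \<in> vec.span (w ` Bs)" .
  qed
  then have "vec.dim (rows A) \<le> card (w ` Bs)" using fin by (intro vec.dim_le_card) auto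
  also have "\<dots> \<le> card Bs" using fin by (rule card_image_le)
  also have "\<dots> = vec.dim (columns A)" using Bs(4) by simp
  finally show ?thesis .
qed

lemma rank_transpose_gen: "rank (transpose (A::'a::field^'n^'m)) = rank A"
  unfolding row_rank_def_gen
  using dim_rows_le_columns[of A] dim_rows_le_columns[of "transpose A"] by simp



lemma mpow_Suc': "mpow B (Suc m) = B ** mpow B m"
proof (induction m)
  case (Suc m) then show ?case by (metis matrix_mul_assoc mpow.simps(2))
qed simp

lemma mpow_transpose: "mpow (transpose B) m = transpose (mpow B m)"
proof (induction m)
  case (Suc m) then show ?case by (metis mpow.simps(2) mpow_Suc' matrix_transpose_mul)
qed simp

lemma rank_mpow_le: "rank (mpow B (Suc j)) \<le> rank (mpow B j)"
proof -
  have "vec.dim (rows (mpow B (Suc j))) \<le> vec.dim (vec.span (rows (mpow B j)))"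
    unfolding mpow_Suc' by (rule vec.dim_subset[OF rows_mult_span])
  then show ?thesis unfolding row_rank_def_gen by simp
qed

lemma mind_exists: "\<exists>j. rank (mpow B (Suc j)) = rank (mpow B j)"
proof (rule ccontr)
  assume "\<not> ?thesis"
  then have lt: "rank (mpow B (Suc j)) < rank (mpow B j)" for j
    using rank_mpow_le[of B j] by (simp add: order_less_le)
  have "rank (mpow B j) + j \<le> rank (mpow B 0)" for j
  proof (induction j)
    case (Suc j) then show ?case using lt[of j] by simp
  qed simp
  from this[of "Suc (rank (mpow B 0))"] show False by simp
qed

lemma mind_prop: "rank (mpow B (Suc (mind B))) = rank (mpow B (mind B))"
  unfolding mind_def by (rule LeastI_ex[OF mind_exists])

lemma Z_at:
  assumes "rank (mpow B (Suc j)) = rank (mpow B j)"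
  shows "\<exists>Z. mpow B j = Z ** mpow B (Suc j)"
proof -
  let ?S1 = "vec.span (rows (mpow B (Suc j)))" and ?S0 = "vec.span (rows (mpow B j))"
  have sub: "?S1 \<subseteq> ?S0"
    unfolding mpow_Suc' using rows_mult_span vec.span_mono vec.span_span by metis
  have "vec.dim ?S0 \<le> vec.dim ?S1" using assms unfolding row_rank_def_gen by simp
  then have "?S1 = ?S0" using sub by (intro vec.subspace_dim_equal) auto
  then have "rows (mpow B j) \<subseteq> ?S1" using vec.span_superset by blast
  then show ?thesis by (rule rows_span_factor)
qed

lemma Z_ge:
  assumes "mind B \<le> k"
  shows "\<exists>Z. mpow B k = Z ** mpow B (Suc k)"
  using assms
proof (induction k rule: dec_induct)
  case base then show ?case using Z_at[OF mind_prop] .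
next
  case (step k)
  then obtain Z where "mpow B k = Z ** mpow B (Suc k)" by blast
  then have "mpow B (Suc k) = Z ** mpow B (Suc (Suc k))"
    by (simp add: matrix_mul_assoc)
  then show ?case by blast
qed

lemma mind_transpose: "mind (transpose B) = mind B"
  unfolding mind_def mpow_transpose rank_transpose_gen ..

lemma Y_ge:
  assumes "mind B \<le> k"
  shows "\<exists>Y. mpow B k = mpow B (Suc k) ** Y"
proof -
  obtain Z where "mpow (transpose B) k = Z ** mpow (transpose B) (Suc k)"
    using Z_ge[of "transpose B" k] assms by (auto simp: mind_transpose)
  then have "transpose (mpow B k) = Z ** transpose (mpow B (Suc k))" by (simp only: mpow_transpose)
  then have "mpow B k = mpow B (Suc k) ** transpose Z"
    by (metis matrix_transpose_mul transpose_transpose)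
  then show ?thesis by blast
qed



lemma that_that: "that M (that N C) = that (M ** N) C"
proof -
  have "(\<Sum>l\<in>UNIV. M $ k $ l * (\<Sum>m\<in>UNIV. N $ l $ m * C $ m $ i $ j)) =
        (\<Sum>m\<in>UNIV. (\<Sum>l\<in>UNIV. M $ k $ l * N $ l $ m) * C $ m $ i $ j)" for k i j
    by (simp add: sum_distrib_left sum_distrib_right mult.assoc) (rule sum.swap)
  then show ?thesis by (simp add: that_def matrix_matrix_mult_def vec_eq_iff)
qed

lemma that_id: "that (mat 1) C = C"
  by (simp add: that_def mat_def vec_eq_iff if_distrib[of "\<lambda>x. x * _"] cong: if_cong)

locale tctx =
  fixes M :: "complex ^ 'p::finite ^ 'p" and N :: "complex ^ 'p ^ 'p"
  assumes MN: "M ** N = mat 1" and NM: "N ** M = mat 1"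
begin

lemma that_inj: "that M C = that M D \<Longrightarrow> C = (D :: ('n::finite,'p) tensor)"
  by (metis that_that NM that_id)

lemma that_surj: "that M (that N X) = (X :: ('n::finite,'p) tensor)"
  by (simp add: that_that MN that_id)

lemma that_mprod:
  fixes C D :: "('n::finite,'p) tensor"
  shows "that M (mprod M C D) $ k = that M C $ k ** that M D $ k"
proof -
  let ?X = "(\<chi> k. that M C $ k ** that M D $ k) :: ('n::finite,'p) tensor"
  have "mprod M C D = that N ?X"
    unfolding mprod_def
  proof (rule the_equality)
    show "\<forall>k. that M (that N ?X) $ k = that M C $ k ** that M D $ k" by (simp add: that_surj)
  next
    fix E :: "('n,'p) tensor" assume "\<forall>k. that M E $ k = that M C $ k ** that M D $ k"
    then have "that M E = that M (that N ?X)" by (simp add: that_surj vec_eq_iff)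
    then show "E = that N ?X" by (rule that_inj)
  qed
  then show ?thesis by (simp add: that_surj)
qed

lemma that_tid: "that M (tid M :: ('n::finite,'p) tensor) $ k = mat 1"
proof -
  let ?X = "(\<chi> k. mat 1) :: ('n::finite,'p) tensor"
  have "tid M = that N ?X"
    unfolding tid_def
  proof (rule the_equality)
    show "\<forall>k. that M (that N ?X) $ k = mat 1" by (simp add: that_surj)
  next
    fix E :: "('n,'p) tensor" assume "\<forall>k. that M E $ k = mat 1"
    then have "that M E = that M (that N ?X)" by (simp add: that_surj vec_eq_iff)
    then show "E = that N ?X" by (rule that_inj)
  qed
  then show ?thesis by (simp add: that_surj)
qed

lemma that_tpow: "that M (tpow M A m) $ i = mpow (that M A $ i) m"
  by (induction m) (simp_all add: that_tid that_mprod)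

lemma is_mon: "mon (mprod M) (tid M :: ('n::finite,'p) tensor) (tpow M)"
proof
  fix a b c :: "('n,'p) tensor"
  show "mprod M (mprod M a b) c = mprod M a (mprod M b c)"
    by (rule that_inj) (simp add: vec_eq_iff[of "that M _"] that_mprod matrix_mul_assoc)
  show "mprod M (tid M) a = a"
    by (rule that_inj) (simp add: vec_eq_iff[of "that M _"] that_mprod that_tid)
  show "mprod M a (tid M) = a"
    by (rule that_inj) (simp add: vec_eq_iff[of "that M _"] that_mprod that_tid)
qed simp_all

end

theorem theorem3p8:
  fixes M :: "complex ^ 'p::finite ^ 'p"
    and A Am :: "('n::finite, 'p) tensor"
    and k :: nat
  assumes "invertible M"
    and "k = tind M A"
    and "Am \<in> tinner M A"
  shows "(mprod M (t1D M A Am) A = mprod M Am A \<longleftrightarrow>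
            mprod M (mprod M A (tdrazin M A)) A = A)
       \<and> (mprod M (t1D M A Am) A = mprod M (tdrazin M A) A \<longleftrightarrow> t1D M A Am = tdrazin M A)
       \<and> (mprod M (mprod M (tpow M A k) Am) (tpow M A k) = tpow M A k \<longleftrightarrow>
            mprod M (mprod M (tpow M A k) (t1D M A Am)) (tpow M A k) = tpow M A k)
       \<and> (t1D M A Am = tdrazin M A \<longleftrightarrow> mprod M (t1D M A Am) A = mprod M A (t1D M A Am))"
proof -
  obtain N where MN: "M ** N = mat 1" and NM: "N ** M = mat 1"
    using assms(1) unfolding invertible_def by blast
  interpret tctx M N using MN NM by unfold_locales
  interpret mon "mprod M" "tid M :: ('n,'p) tensor" "tpow M" by (rule is_mon)
  have kge: "mind (that M A $ i) \<le> k" for i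
    unfolding assms(2) tind_def by (rule Max_ge) auto
  have "\<forall>i. \<exists>Z. mpow (that M A $ i) k = Z ** mpow (that M A $ i) (Suc k)"
    using Z_ge kge by blast
  then obtain Z where Z: "\<And>i. mpow (that M A $ i) k = Z i ** mpow (that M A $ i) (Suc k)" by metis
  have "\<forall>i. \<exists>Y. mpow (that M A $ i) k = mpow (that M A $ i) (Suc k) ** Y"
    using Y_ge kge by blast
  then obtain Y where Y: "\<And>i. mpow (that M A $ i) k = mpow (that M A $ i) (Suc k) ** Y i" by metis
  define z :: "('n,'p) tensor" where "z = that N (\<chi> i. Z i)"
  define y :: "('n,'p) tensor" where "y = that N (\<chi> i. Y i)"
  have zz: "tpow M A k = mprod M z (tpow M A (Suc k))"
    by (rule that_inj) (simp add: vec_eq_iff[of "that M _"] that_mprod that_tpow z_def that_surj Z[symmetric]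
        del: mpow.simps tpow.simps)
  have yy: "tpow M A k = mprod M (tpow M A (Suc k)) y"
    by (rule that_inj) (simp add: vec_eq_iff[of "that M _"] that_mprod that_tpow y_def that_surj Y[symmetric]
        del: mpow.simps tpow.simps)
  have ex: "dr A k (mprod M (tpow M z (Suc k)) (tpow M A k))"
    by (rule dr_exists[OF zz yy])
  have td: "tdrazin M A = (THE W. dr A k W)"
    unfolding tdrazin_def dr_def assms(2) ..
  have D: "dr A k (tdrazin M A)"
    unfolding td by (rule theI[of "dr A k", OF ex dr_unique[OF _ ex]])
  have X: "mprod M (mprod M A Am) A = A" using assms(3) by (simp add: tinner_def)
  show ?thesis
    using main[OF D X] unfolding t1D_def by simp
qed


end
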